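(* Let $G$ be a connected graph obtained by point-attaching from pairwise disjoint connected graphs $G_1,\dots,G_k$. Then $\chi_{dom}(G)\le \chi_{dom}(G_1)+\chi_{dom}(G_2)+\cdots+\chi_{dom}(G_k)$.
   Context: All graphs are finite and simple. A dominated coloring of a graph is a proper coloring in which every color class is dominated by at least one vertex, i.e. for each color class $C$ there is a vertex adjacent to every vertex of $C$; $\chi_{dom}$ denotes the minimum number of colors in a dominated coloring. Point-attaching: given pairwise disjoint connected graphs $G_1,\dots,G_k$, select a vertex of $G_1$ and a vertex of $G_2$ and identify them; then continue inductively, each time identifying a vertex of the graph built so far with a vertex of the next $G_i$. The resulting connected graph is said to be obtained by point-attaching from $G_1,\dots,G_k$. *)

theory Defs
  imports Main
begin

type_synonym 'a graph = "'a set \<times> ('a \<times> 'a) set"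

definition verts :: "'a graph \<Rightarrow> 'a set" where "verts G = fst G"
definition edges :: "'a graph \<Rightarrow> ('a \<times> 'a) set" where "edges G = snd G"

definition simple_graph :: "'a graph \<Rightarrow> bool" where
  "simple_graph G \<longleftrightarrow> finite (verts G) \<and> edges G \<subseteq> verts G \<times> verts G
     \<and> sym (edges G) \<and> irrefl (edges G)"

definition connected_graph :: "'a graph \<Rightarrow> bool" where
  "connected_graph G \<longleftrightarrow> simple_graph G \<and> verts G \<noteq> {}
     \<and> (\<forall>x\<in>verts G. \<forall>y\<in>verts G. (x, y) \<in> (edges G)\<^sup>*)"

definition dominated_coloring :: "'a graph \<Rightarrow> ('a \<Rightarrow> nat) \<Rightarrow> bool" where
  "dominated_coloring G c \<longleftrightarrow>
     (\<forall>(x, y) \<in> edges G. c x \<noteq> c y)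
     \<and> (\<forall>i \<in> c ` verts G. \<exists>w \<in> verts G.
           \<forall>x \<in> verts G. c x = i \<longrightarrow> (w, x) \<in> edges G)"

definition chi_dom :: "'a graph \<Rightarrow> nat" where
  "chi_dom G = (LEAST n. \<exists>c. dominated_coloring G c \<and> card (c ` verts G) = n)"

definition attach :: "'a graph \<Rightarrow> 'a \<Rightarrow> 'a graph \<Rightarrow> 'a \<Rightarrow> 'a graph" where
  "attach G u H v =
     (let r = (\<lambda>x. if x = v then u else x) in
      (verts G \<union> r ` verts H, edges G \<union> (\<lambda>(x, y). (r x, r y)) ` edges H))"

inductive point_attaching :: "'a graph list \<Rightarrow> 'a graph \<Rightarrow> bool" where
  single: "point_attaching [G] G"
| step: "point_attaching Gs G \<Longrightarrow> u \<in> verts G \<Longrightarrow> v \<in> verts H \<Longrightarrow>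
           point_attaching (Gs @ [H]) (attach G u H v)"

end

theory Submission
  imports Defs
begin

lemma chi_dom_attained:
  assumes "\<exists>c. dominated_coloring H c"
  shows "\<exists>c. dominated_coloring H c \<and> card (c ` verts H) = chi_dom H"
proof -
  from assms obtain c where "dominated_coloring H c" by blast
  then have "\<exists>n c. dominated_coloring H c \<and> card (c ` verts H) = n" by blast
  from LeastI_ex[OF this] show ?thesis unfolding chi_dom_def by blast
qed

lemma combine:
  assumes fG: "finite (verts G)" and eG: "edges G \<subseteq> verts G \<times> verts G"
    and cG: "dominated_coloring G cG"
    and sH: "simple_graph H" and cH: "dominated_coloring H cH"
    and disj: "verts G \<inter> verts H = {}" and u: "u \<in> verts G" and v: "v \<in> verts H"
  shows "\<exists>c. dominated_coloring (attach G u H v) c \<and>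
     card (c ` verts (attach G u H v)) \<le> card (cG ` verts G) + card (cH ` verts H)"
proof -
  obtain N where N: "\<forall>x\<in>verts G. cG x < N"
    using fG by (metis finite_imageI finite_nat_set_iff_bounded imageI)
  define r where "r = (\<lambda>x. if x = v then u else x)"
  have VA: "verts (attach G u H v) = verts G \<union> r ` verts H"
    unfolding attach_def verts_def r_def by (simp add: Let_def)
  have EA: "edges (attach G u H v) = edges G \<union> (\<lambda>(x, y). (r x, r y)) ` edges H"
    unfolding attach_def edges_def r_def by (simp add: Let_def)
  have fH: "finite (verts H)" and eH: "edges H \<subseteq> verts H \<times> verts H"
    and irH: "irrefl (edges H)" using sH unfolding simple_graph_def by auto
  define c where "c = (\<lambda>x. if x \<in> verts G then cG x else N + cH x)"
  have rin: "r y \<notin> verts G \<Longrightarrow> y \<noteq> v \<and> r y = y" for y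
    using u unfolding r_def by auto
  have rnot: "y \<in> verts H \<Longrightarrow> y \<noteq> v \<Longrightarrow> r y = y \<and> y \<notin> verts G" for y
    using disj unfolding r_def by auto
  have proper: "\<forall>(x, y) \<in> edges (attach G u H v). c x \<noteq> c y"
  proof safe
    fix x y assume xy: "(x, y) \<in> edges (attach G u H v)" and eq: "c x = c y"
    show False
    proof (cases "(x, y) \<in> edges G")
      case True
      then have "x \<in> verts G" "y \<in> verts G" using eG by auto
      then have "cG x = cG y" using eq unfolding c_def by simp
      then show False using True cG unfolding dominated_coloring_def by auto
    next
      case False
      then obtain a b where ab: "(a, b) \<in> edges H" "x = r a" "y = r b" using xy EA by auto
      have abV: "a \<in> verts H" "b \<in> verts H" "a \<noteq> b" using ab eH irH
        by (auto simp: irrefl_def)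
      have ne: "cH a \<noteq> cH b" using ab cH unfolding dominated_coloring_def by auto
      show False
      proof (cases "a = v")
        case True
        then have "x = u" "b \<noteq> v" using ab abV unfolding r_def by auto
        then show False using rnot[of b] abV ab eq N u unfolding c_def by force
      next
        case False
        note a = rnot[OF abV(1) False]
        show False
        proof (cases "b = v")
          case True
          then have "y = u" using ab unfolding r_def by auto
          then show False using a ab eq N u unfolding c_def by force
        next
          case False
          note b = rnot[OF abV(2) False]
          then show False using a ab eq ne unfolding c_def by auto
        qed
      qed
    qed
  qed
  have dom: "\<forall>i \<in> c ` verts (attach G u H v). \<exists>w \<in> verts (attach G u H v).
           \<forall>x \<in> verts (attach G u H v). c x = i \<longrightarrow> (w, x) \<in> edges (attach G u H v)"
  proof
    fix i assume "i \<in> c ` verts (attach G u H v)"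
    then obtain y where y: "y \<in> verts (attach G u H v)" "i = c y" by blast
    show "\<exists>w \<in> verts (attach G u H v).
           \<forall>x \<in> verts (attach G u H v). c x = i \<longrightarrow> (w, x) \<in> edges (attach G u H v)"
    proof (cases "y \<in> verts G")
      case True
      then have i: "i = cG y" using y c_def by auto
      then obtain w where w: "w \<in> verts G" "\<forall>x\<in>verts G. cG x = i \<longrightarrow> (w, x) \<in> edges G"
        using cG True unfolding dominated_coloring_def by blast
      show ?thesis
      proof (rule bexI[of _ w])
        show "w \<in> verts (attach G u H v)" using w VA by auto
        show "\<forall>x \<in> verts (attach G u H v). c x = i \<longrightarrow> (w, x) \<in> edges (attach G u H v)"
        proof (intro ballI impI)
          fix x assume x: "x \<in> verts (attach G u H v)" "c x = i"
          show "(w, x) \<in> edges (attach G u H v)"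
          proof (cases "x \<in> verts G")
            case True then show ?thesis using w x EA c_def by auto
          next
            case False then have "c x \<ge> N" using c_def by auto
            then show ?thesis using x i N True by auto
          qed
        qed
      qed
    next
      case False
      then obtain z where z: "z \<in> verts H" "y = r z" using y VA by auto
      with rin[of z] False have zv: "z \<noteq> v" "y = z" by auto
      then have i: "i = N + cH z" using False y c_def by auto
      obtain w where w: "w \<in> verts H" "\<forall>x\<in>verts H. cH x = cH z \<longrightarrow> (w, x) \<in> edges H"
        using cH z unfolding dominated_coloring_def by blast
      show ?thesis
      proof (rule bexI[of _ "r w"])
        show "r w \<in> verts (attach G u H v)" using w VA by auto
        show "\<forall>x \<in> verts (attach G u H v). c x = i \<longrightarrow> (r w, x) \<in> edges (attach G u H v)"
        proof (intro ballI impI)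
          fix x assume x: "x \<in> verts (attach G u H v)" "c x = i"
          have xG: "x \<notin> verts G"
          proof
            assume "x \<in> verts G" then have "c x < N" using N c_def by auto
            then show False using x i by auto
          qed
          then obtain t where t: "t \<in> verts H" "x = r t" using x VA by auto
          with rin[of t] xG have "t \<noteq> v" "x = t" by auto
          then have "cH t = cH z" using x xG i c_def by auto
          then have "(w, t) \<in> edges H" using w t by auto
          then have "(r w, r t) \<in> edges (attach G u H v)" using EA by force
          then show "(r w, x) \<in> edges (attach G u H v)" using t by simp
        qed
      qed
    qed
  qed
  have sub: "c ` verts (attach G u H v) \<subseteq> cG ` verts G \<union> (\<lambda>n. N + n) ` (cH ` verts H)"
  proof
    fix i assume "i \<in> c ` verts (attach G u H v)"
    then obtain y where y: "y \<in> verts (attach G u H v)" "i = c y" by blast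
    show "i \<in> cG ` verts G \<union> (\<lambda>n. N + n) ` (cH ` verts H)"
    proof (cases "y \<in> verts G")
      case True then show ?thesis using y c_def by auto
    next
      case False
      then obtain z where z: "z \<in> verts H" "y = r z" using y VA by auto
      with rin[of z] False have "y = z" by auto
      then show ?thesis using y z False c_def by auto
    qed
  qed
  have "card (c ` verts (attach G u H v)) \<le> card (cG ` verts G \<union> (\<lambda>n. N + n) ` (cH ` verts H))"
    by (rule card_mono[OF _ sub]) (use fG fH in auto)
  also have "\<dots> \<le> card (cG ` verts G) + card ((\<lambda>n. N + n) ` (cH ` verts H))"
    by (rule card_Un_le)
  also have "\<dots> \<le> card (cG ` verts G) + card (cH ` verts H)"
    using card_image_le[of "cH ` verts H" "\<lambda>n. N + n"] fH by auto
  finally show ?thesis using proper dom unfolding dominated_coloring_def by blast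
qed

lemma main_ind:
  assumes "point_attaching Gs G"
  shows "(\<forall>i<length Gs. connected_graph (Gs!i)) \<longrightarrow>
    (\<forall>i<length Gs. \<forall>j<length Gs. i\<noteq>j \<longrightarrow> verts (Gs!i) \<inter> verts (Gs!j) = {}) \<longrightarrow>
    (\<forall>i<length Gs. \<exists>c. dominated_coloring (Gs!i) c) \<longrightarrow>
   finite (verts G) \<and> edges G \<subseteq> verts G \<times> verts G \<and> verts G \<subseteq> (\<Union>i<length Gs. verts (Gs!i))
   \<and> (\<exists>c. dominated_coloring G c \<and> card (c ` verts G) \<le> sum_list (map chi_dom Gs))"
  using assms
proof induction
  case (single G)
  show ?case
  proof (intro impI)
    assume a: "\<forall>i<length [G]. connected_graph ([G] ! i)"
      "\<forall>i<length [G]. \<exists>c. dominated_coloring ([G] ! i) c"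
    then have "simple_graph G" "\<exists>c. dominated_coloring G c"
      unfolding connected_graph_def by auto
    then show "finite (verts G) \<and> edges G \<subseteq> verts G \<times> verts G \<and>
      verts G \<subseteq> (\<Union>i<length [G]. verts ([G] ! i)) \<and>
      (\<exists>c. dominated_coloring G c \<and> card (c ` verts G) \<le> sum_list (map chi_dom [G]))"
      using chi_dom_attained[of G] unfolding simple_graph_def by auto
  qed
next
  case (step Gs G u v H)
  show ?case
  proof (intro impI)
    let ?L = "Gs @ [H]"
    assume c1: "\<forall>i<length ?L. connected_graph (?L ! i)"
      and c2: "\<forall>i<length ?L. \<forall>j<length ?L. i\<noteq>j \<longrightarrow> verts (?L!i) \<inter> verts (?L!j) = {}"
      and c3: "\<forall>i<length ?L. \<exists>c. dominated_coloring (?L ! i) c"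
    have H: "?L ! length Gs = H" by simp
    have IH: "finite (verts G) \<and> edges G \<subseteq> verts G \<times> verts G \<and> verts G \<subseteq> (\<Union>i<length Gs. verts (Gs!i))
      \<and> (\<exists>c. dominated_coloring G c \<and> card (c ` verts G) \<le> sum_list (map chi_dom Gs))"
    proof -
      have a1: "\<forall>i<length Gs. connected_graph (Gs!i)"
      proof (intro allI impI)
        fix i assume "i < length Gs" then show "connected_graph (Gs!i)"
          using c1[rule_format, of i] by (simp add: nth_append)
      qed
      have a2: "\<forall>i<length Gs. \<forall>j<length Gs. i\<noteq>j \<longrightarrow> verts (Gs!i) \<inter> verts (Gs!j) = {}"
      proof (intro allI impI)
        fix i j assume "i < length Gs" "j < length Gs" "i \<noteq> j"
        then show "verts (Gs!i) \<inter> verts (Gs!j) = {}"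
          using c2[rule_format, of i j] by (simp add: nth_append)
      qed
      have a3: "\<forall>i<length Gs. \<exists>c. dominated_coloring (Gs!i) c"
      proof (intro allI impI)
        fix i assume "i < length Gs" then show "\<exists>c. dominated_coloring (Gs!i) c"
          using c3[rule_format, of i] by (simp add: nth_append)
      qed
      show ?thesis using step.IH a1 a2 a3 by blast
    qed
    have sH: "simple_graph H" using c1[rule_format, of "length Gs"] unfolding connected_graph_def by simp
    obtain cH where cH: "dominated_coloring H cH" "card (cH ` verts H) = chi_dom H"
      using chi_dom_attained[of H] c3[rule_format, of "length Gs"] by auto
    have dH: "verts (Gs ! i) \<inter> verts H = {}" if "i < length Gs" for i
      using c2[rule_format, of i "length Gs"] that by (auto simp: nth_append)
    have disj: "verts G \<inter> verts H = {}" using IH dH by blast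
    obtain cG where cG: "dominated_coloring G cG" "card (cG ` verts G) \<le> sum_list (map chi_dom Gs)"
      using IH by blast
    obtain c where c: "dominated_coloring (attach G u H v) c"
      "card (c ` verts (attach G u H v)) \<le> card (cG ` verts G) + card (cH ` verts H)"
      using combine[OF _ _ cG(1) sH cH(1) disj step.hyps(2) step.hyps(3)] IH by blast
    have fH: "finite (verts H)" and eH: "edges H \<subseteq> verts H \<times> verts H" using sH
      unfolding simple_graph_def by auto
    have VA: "verts (attach G u H v) \<subseteq> verts G \<union> verts H \<union> {u}"
      unfolding attach_def verts_def by (auto simp: Let_def)
    have VA2: "verts G \<union> verts H \<subseteq> verts (attach G u H v) \<union> {v}"
      unfolding attach_def verts_def by (auto simp: Let_def)
    have EA: "edges (attach G u H v) \<subseteq> verts (attach G u H v) \<times> verts (attach G u H v)"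
    proof -
      define r where "r = (\<lambda>x. if x = v then u else x)"
      have V: "verts (attach G u H v) = verts G \<union> r ` verts H"
        unfolding attach_def verts_def r_def by (simp add: Let_def)
      have E: "edges (attach G u H v) = edges G \<union> (\<lambda>(x, y). (r x, r y)) ` edges H"
        unfolding attach_def edges_def r_def by (simp add: Let_def)
      show ?thesis unfolding V E using IH eH by fastforce
    qed
    have U: "(\<Union>i<length ?L. verts (?L!i)) = (\<Union>i<length Gs. verts (Gs!i)) \<union> verts H"
    proof -
      have "{..<length ?L} = insert (length Gs) {..<length Gs}" by auto
      then show ?thesis by (auto simp: nth_append)
    qed
    show "finite (verts (attach G u H v)) \<and> edges (attach G u H v) \<subseteq> verts (attach G u H v) \<times> verts (attach G u H v) \<and>
      verts (attach G u H v) \<subseteq> (\<Union>i<length ?L. verts (?L!i)) \<and>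
      (\<exists>c. dominated_coloring (attach G u H v) c \<and> card (c ` verts (attach G u H v)) \<le> sum_list (map chi_dom ?L))"
    proof (intro conjI)
      show "finite (verts (attach G u H v))" using VA IH fH finite_subset by fastforce
      show "edges (attach G u H v) \<subseteq> verts (attach G u H v) \<times> verts (attach G u H v)" by (rule EA)
      show "verts (attach G u H v) \<subseteq> (\<Union>i<length ?L. verts (?L!i))"
        using VA IH U step.hyps(2) by blast
      show "\<exists>c. dominated_coloring (attach G u H v) c \<and> card (c ` verts (attach G u H v)) \<le> sum_list (map chi_dom ?L)"
        using c cG cH by auto
    qed
  qed
qed

theorem mainTheorem2:
  fixes Gs :: "'a graph list" and G :: "'a graph"
  assumes "Gs \<noteq> []"
    and "\<forall>i < length Gs. connected_graph (Gs ! i)"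
    and "\<forall>i < length Gs. \<forall>j < length Gs. i \<noteq> j \<longrightarrow> verts (Gs ! i) \<inter> verts (Gs ! j) = {}"
    and "\<forall>i < length Gs. \<exists>c. dominated_coloring (Gs ! i) c"
    and "point_attaching Gs G"
  shows "chi_dom G \<le> (\<Sum>i < length Gs. chi_dom (Gs ! i))"
proof -
  obtain c where c: "dominated_coloring G c" "card (c ` verts G) \<le> sum_list (map chi_dom Gs)"
    using main_ind[OF assms(5)] assms(2-4) by blast
  have "chi_dom G \<le> card (c ` verts G)"
    unfolding chi_dom_def by (rule Least_le) (use c in blast)
  have "sum_list (map chi_dom Gs) = (\<Sum>i < length Gs. chi_dom (Gs ! i))"
    by (simp add: sum_list_sum_nth atLeast0LessThan)
  show ?thesis using c by (metis \<open>chi_dom G \<le> card (c ` verts G)\<close> \<open>sum_list (map chi_dom Gs) = (\<Sum>i < length Gs. chi_dom (Gs ! i))\<close> order_trans)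
qed

end
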